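(* Let $q$ be a prime and $b,c$ positive integers. (1) If $\frac{b+c}{\gcd(b,c)}=q$, then the threshold is $n_0(b,c;q)=\gcd(b,c)$. (2) If $\gcd(b,c)=1$ and $b+c=q^2$, then $n_0(b,c;q)=q+1$.
   Context: The Hamming graph $H(n,q)$ has vertex set $\mathbb{Z}_q^n$, two vertices adjacent iff they differ in exactly one coordinate. A $(b,c)$-coloring of $H(n,q)$ is a surjective map onto $\{1,2\}$ in which each color-1 vertex has exactly $b$ neighbours of color 2 and each color-2 vertex has exactly $c$ neighbours of color 1. The threshold $n_0(b,c;q)$ is the least $n$ such that a $(b,c)$-coloring of $H(n,q)$ exists (such colorings then exist for all $n\ge n_0$ and for no smaller $n$). *)

theory Defs
  imports Main "HOL-Computational_Algebra.Primes"
begin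

definition hamming_vertices :: "nat \<Rightarrow> nat \<Rightarrow> (nat \<Rightarrow> nat) set" where
  "hamming_vertices n q = {x. (\<forall>i<n. x i < q) \<and> (\<forall>i\<ge>n. x i = 0)}"

definition hamming_adj :: "nat \<Rightarrow> (nat \<Rightarrow> nat) \<Rightarrow> (nat \<Rightarrow> nat) \<Rightarrow> bool" where
  "hamming_adj n x y \<longleftrightarrow> card {i. i < n \<and> x i \<noteq> y i} = 1"

definition is_bc_coloring :: "nat \<Rightarrow> nat \<Rightarrow> nat \<Rightarrow> nat \<Rightarrow> ((nat \<Rightarrow> nat) \<Rightarrow> nat) \<Rightarrow> bool" where
  "is_bc_coloring b c n q f \<longleftrightarrow>
     f ` hamming_vertices n q = {1, 2} \<and>
     (\<forall>x\<in>hamming_vertices n q. f x = 1 \<longrightarrow>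
        card {y\<in>hamming_vertices n q. hamming_adj n x y \<and> f y = 2} = b) \<and>
     (\<forall>x\<in>hamming_vertices n q. f x = 2 \<longrightarrow>
        card {y\<in>hamming_vertices n q. hamming_adj n x y \<and> f y = 1} = c)"

definition has_bc_coloring :: "nat \<Rightarrow> nat \<Rightarrow> nat \<Rightarrow> nat \<Rightarrow> bool" where
  "has_bc_coloring b c n q \<longleftrightarrow> (\<exists>f. is_bc_coloring b c n q f)"

definition threshold :: "nat \<Rightarrow> nat \<Rightarrow> nat \<Rightarrow> nat" where
  "threshold b c q = (LEAST n. has_bc_coloring b c n q)"

end

theory Submission
  imports Defs "HOL-Number_Theory.Cong"
begin

lemma hv: "hamming_vertices n q = {f. \<forall>x. (x \<in> {..<n} \<longrightarrow> f x \<in> {..<q}) \<and> (x \<notin> {..<n} \<longrightarrow> f x = (0::nat))}"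
    unfolding hamming_vertices_def lessThan_iff by (intro Collect_cong) (metis not_le)
lemma finite_V: "finite (hamming_vertices n q)"
  unfolding hv by (rule finite_set_of_finite_funs) auto

lemma upd_V: "x \<in> hamming_vertices n q \<Longrightarrow> j < n \<Longrightarrow> a < q \<Longrightarrow> x(j:=a) \<in> hamming_vertices n q"
  unfolding hamming_vertices_def by auto

lemma adj_iff:
  assumes "x \<in> hamming_vertices n q" "y \<in> hamming_vertices n q"
  shows "hamming_adj n x y \<longleftrightarrow> (\<exists>j<n. y j \<noteq> x j \<and> (\<forall>i. i \<noteq> j \<longrightarrow> y i = x i))"
proof
  assume "hamming_adj n x y"
  hence "\<exists>j. {i. i < n \<and> x i \<noteq> y i} = {j}"
    unfolding hamming_adj_def by (simp add: card_1_singleton_iff)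
  then obtain j where j: "{i. i < n \<and> x i \<noteq> y i} = {j}" by blast
  have "j \<in> {i. i < n \<and> x i \<noteq> y i}" unfolding j by simp
  hence "j < n" "y j \<noteq> x j" by auto
  moreover have "\<forall>i. i \<noteq> j \<longrightarrow> y i = x i"
  proof (intro allI impI)
    fix i assume "i \<noteq> j"
    show "y i = x i"
    proof (cases "i < n")
      case True
      have "i \<notin> {i. i < n \<and> x i \<noteq> y i}" unfolding j using \<open>i\<noteq>j\<close> by simp
      thus ?thesis using True by simp
    next
      case False thus ?thesis using assms unfolding hamming_vertices_def by auto
    qed
  qed
  ultimately show "\<exists>j<n. y j \<noteq> x j \<and> (\<forall>i. i \<noteq> j \<longrightarrow> y i = x i)" by blast
next
  assume "\<exists>j<n. y j \<noteq> x j \<and> (\<forall>i. i \<noteq> j \<longrightarrow> y i = x i)"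
  then obtain j where j: "j<n" "y j \<noteq> x j" "\<forall>i. i \<noteq> j \<longrightarrow> y i = x i" by blast
  have "{i. i < n \<and> x i \<noteq> y i} = {j}"
    using j by auto
  thus "hamming_adj n x y" unfolding hamming_adj_def by simp
qed

lemma adj_upd: "j < n \<Longrightarrow> a \<noteq> x j \<Longrightarrow> hamming_adj n x (x(j:=a))"
proof -
  assume "j < n" "a \<noteq> x j"
  hence "{i. i < n \<and> x i \<noteq> (x(j:=a)) i} = {j}" by auto
  thus ?thesis unfolding hamming_adj_def by simp
qed

definition Dx :: "nat \<Rightarrow> nat \<Rightarrow> (nat \<Rightarrow> nat) \<Rightarrow> ((nat \<Rightarrow> nat) \<Rightarrow> bool) \<Rightarrow> (nat \<times> nat) set" where
  "Dx n q x P = {(j,a). j<n \<and> a<q \<and> a \<noteq> x j \<and> P (x(j:=a))}"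

lemma nbr_param:
  assumes "x \<in> hamming_vertices n q"
  shows "{y\<in>hamming_vertices n q. hamming_adj n x y \<and> P y} = (\<lambda>(j,a). x(j:=a)) ` Dx n q x P"
    and "inj_on (\<lambda>(j,a). x(j:=a)) (Dx n q x P)"
proof -
  show "{y\<in>hamming_vertices n q. hamming_adj n x y \<and> P y} = (\<lambda>(j,a). x(j:=a)) ` Dx n q x P"
  proof (rule set_eqI, rule iffI)
    fix y assume "y \<in> {y\<in>hamming_vertices n q. hamming_adj n x y \<and> P y}"
    hence y: "y \<in> hamming_vertices n q" "hamming_adj n x y" "P y" by auto
    then obtain j where j: "j<n" "y j \<noteq> x j" "\<forall>i. i \<noteq> j \<longrightarrow> y i = x i" using adj_iff[OF assms] by blast
    have yx: "x(j := y j) = y" using j(3) by (intro ext) simp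
    have "y j < q" using y(1) j(1) unfolding hamming_vertices_def by auto
    hence "(j, y j) \<in> Dx n q x P" using j y(3) yx unfolding Dx_def by auto
    hence "x(j := y j) \<in> (\<lambda>(j,a). x(j:=a)) ` Dx n q x P" by (rule rev_image_eqI) simp
    thus "y \<in> (\<lambda>(j,a). x(j:=a)) ` Dx n q x P" unfolding yx .
  next
    fix y assume "y \<in> (\<lambda>(j,a). x(j:=a)) ` Dx n q x P"
    then obtain j a where "(j,a) \<in> Dx n q x P" and yd: "y = x(j:=a)" by auto
    hence ja: "j<n" "a<q" "a \<noteq> x j" "P (x(j:=a))" unfolding Dx_def by auto
    have "x(j:=a) \<in> {y\<in>hamming_vertices n q. hamming_adj n x y \<and> P y}"
      using upd_V[OF assms ja(1,2)] adj_upd[of j n a x, OF ja(1,3)] ja(4) by simp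
    thus "y \<in> {y\<in>hamming_vertices n q. hamming_adj n x y \<and> P y}" unfolding yd .
  qed
  show "inj_on (\<lambda>(j,a). x(j:=a)) (Dx n q x P)"
  proof (rule inj_onI, clarsimp)
    fix j a j' a' assume "(j,a) \<in> Dx n q x P" "(j',a') \<in> Dx n q x P" and e: "x(j:=a) = x(j':=a')"
    hence "a \<noteq> x j" "a' \<noteq> x j'" unfolding Dx_def by auto
    have "j = j'"
    proof (rule ccontr)
      assume "j \<noteq> j'"
      hence "(x(j:=a)) j = (x(j':=a')) j" using e by simp
      thus False using \<open>j\<noteq>j'\<close> \<open>a \<noteq> x j\<close> by simp
    qed
    moreover have "a = a'" using e \<open>j = j'\<close> by (metis fun_upd_same)
    ultimately show "j = j' \<and> a = a'" by simp
  qed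
qed

lemma card_nbr:
  assumes "x \<in> hamming_vertices n q"
  shows "card {y\<in>hamming_vertices n q. hamming_adj n x y \<and> P y} = card (Dx n q x P)"
  unfolding nbr_param(1)[OF assms] by (rule card_image[OF nbr_param(2)[OF assms]])

lemma sum_nbr:
  assumes "x \<in> hamming_vertices n q"
  shows "(\<Sum>y\<in>{y\<in>hamming_vertices n q. hamming_adj n x y \<and> P y}. g y) = (\<Sum>(j,a)\<in>Dx n q x P. g (x(j:=a)))"
  unfolding nbr_param(1)[OF assms] by (subst sum.reindex[OF nbr_param(2)[OF assms]]) (simp add: case_prod_unfold)

lemma Dx_Sigma: "Dx n q x P = Sigma {..<n} (\<lambda>j. {a. a<q \<and> a \<noteq> x j \<and> P (x(j:=a))})"
  unfolding Dx_def by auto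

lemma finite_Dx: "finite (Dx n q x P)"
  unfolding Dx_Sigma by (rule finite_SigmaI) auto

lemma decomp_sum:
  fixes F :: "(nat \<Rightarrow> nat) \<Rightarrow> 'b::comm_monoid_add"
  assumes "j < n" "0 < q"
  shows "(\<Sum>x\<in>hamming_vertices n q. F x) = (\<Sum>z\<in>{z\<in>hamming_vertices n q. z j = 0}. \<Sum>a<q. F (z(j:=a)))"
proof -
  let ?V = "hamming_vertices n q" and ?W = "{z\<in>hamming_vertices n q. z j = 0}"
  let ?g = "\<lambda>(z,a). (z::nat\<Rightarrow>nat)(j:=a)"
  have img: "?V = ?g ` (?W \<times> {..<q})"
  proof (rule set_eqI, rule iffI)
    fix x assume x: "x \<in> ?V"
    have "x(j:=0) \<in> ?W" using upd_V[OF x assms] by simp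
    moreover have "x j < q" using x assms(1) unfolding hamming_vertices_def by auto
    ultimately have "(x(j:=0), x j) \<in> ?W \<times> {..<q}" by simp
    moreover have "x = ?g (x(j:=0), x j)" by simp
    ultimately show "x \<in> ?g ` (?W \<times> {..<q})" by (rule rev_image_eqI)
  next
    fix x assume "x \<in> ?g ` (?W \<times> {..<q})"
    then obtain z a where za: "z \<in> ?W" "a < q" "x = z(j:=a)" by auto
    show "x \<in> ?V" using upd_V[of z n q j a] za assms by simp
  qed
  have inj: "inj_on ?g (?W \<times> {..<q})"
  proof (rule inj_onI, clarsimp)
    fix z a z' a' assume h: "z j = 0" "z' j = 0" "z(j := a) = z'(j := a')"
    have "a = a'" using h(3) by (metis fun_upd_same)
    moreover have "z = z'"
    proof
      fix i show "z i = z' i"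
      proof (cases "i = j")
        case False thus ?thesis using fun_cong[OF h(3), of i] by simp
      qed (simp add: h(1,2))
    qed
    ultimately show "z = z' \<and> a = a'" by simp
  qed
  have "(\<Sum>x\<in>?g ` (?W \<times> {..<q}). F x) = (\<Sum>p\<in>?W \<times> {..<q}. F (?g p))"
    by (rule sum.reindex[OF inj, unfolded comp_def])
  hence "(\<Sum>x\<in>?V. F x) = (\<Sum>p\<in>?W \<times> {..<q}. F (?g p))" by (simp only: img[symmetric])
  also have "\<dots> = (\<Sum>z\<in>?W. \<Sum>a<q. F (z(j:=a)))"
    unfolding sum.cartesian_product by (simp add: case_prod_unfold)
  finally show ?thesis .
qed

lemma card_Dx_True:
  assumes "x \<in> hamming_vertices n q"
  shows "card (Dx n q x (\<lambda>_. True)) = n * (q - 1)"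
proof -
  have "card (Dx n q x (\<lambda>_. True)) = (\<Sum>j<n. card {a. a<q \<and> a \<noteq> x j \<and> True})"
    unfolding Dx_Sigma by (rule card_SigmaI) auto
  also have "\<dots> = (\<Sum>j<n. q - 1)"
  proof (rule sum.cong[OF refl])
    fix j assume "j \<in> {..<n}"
    hence "x j < q" using assms unfolding hamming_vertices_def by auto
    have "{a. a<q \<and> a \<noteq> x j \<and> True} = {..<q} - {x j}" by auto
    thus "card {a. a<q \<and> a \<noteq> x j \<and> True} = q - 1" using \<open>x j < q\<close> by simp
  qed
  finally show ?thesis by simp
qed

lemma spectral:
  fixes b c n q :: nat and f
  assumes col: "is_bc_coloring b c n q f" and bpos: "0 < b" and cpos: "0 < c" and qpos: "0 < q"
  shows "b + c \<le> n * q"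
    and "b + c = n * q \<Longrightarrow> 0 < n \<Longrightarrow>
           (\<Sum>a<q. (if f ((\<lambda>_. 0)(0:=a)) = 1 then int b else - int c)) = 0"
proof -
  let ?V = "hamming_vertices n q"
  define h where "h y = (if f y = 1 then int b else - int c)" for y
  define k where "k = n * (q - 1)"
  define L where "L j x = (\<Sum>a<q. h (x(j:=a)))" for j x
  have fV: "f y = 1 \<or> f y = 2" if "y \<in> ?V" for y
  proof -
    have "f y \<in> f ` ?V" using that by simp
    thus ?thesis using col unfolding is_bc_coloring_def by auto
  qed
  have finV: "finite ?V" by (rule finite_V)
  have stepA: "(\<Sum>y\<in>{y\<in>?V. hamming_adj n x y \<and> True}. h y) = (int k - int b - int c) * h x" if x: "x \<in> ?V" for x
  proof -
    let ?N = "{y\<in>?V. hamming_adj n x y \<and> True}"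
    let ?N1 = "{y\<in>?V. hamming_adj n x y \<and> f y = 1}"
    let ?N2 = "{y\<in>?V. hamming_adj n x y \<and> f y = 2}"
    have NU: "?N = ?N1 \<union> ?N2" using fV by auto
    have disj: "?N1 \<inter> ?N2 = {}" by auto
    have f1: "finite ?N1" "finite ?N2" using finV by auto
    have cN: "card ?N1 + card ?N2 = k"
      using card_Un_disjoint[OF f1 disj] NU card_nbr[OF x, of "\<lambda>_. True"] card_Dx_True[OF x] k_def by simp
    have "(\<Sum>y\<in>?N. h y) = (\<Sum>y\<in>?N1. h y) + (\<Sum>y\<in>?N2. h y)"
      unfolding NU by (rule sum.union_disjoint[OF f1 disj])
    also have "(\<Sum>y\<in>?N1. h y) = (\<Sum>y\<in>?N1. int b)" by (rule sum.cong) (auto simp: h_def)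
    also have "(\<Sum>y\<in>?N2. h y) = (\<Sum>y\<in>?N2. - int c)" by (rule sum.cong) (auto simp: h_def)
    finally have S: "(\<Sum>y\<in>?N. h y) = int (card ?N1) * int b - int (card ?N2) * int c" by simp
    show ?thesis
    proof (cases "f x = 1")
      case True
      hence "card ?N2 = b" using col x unfolding is_bc_coloring_def by blast
      hence "int (card ?N1) = int k - int b" using cN by linarith
      hence "(\<Sum>y\<in>?N. h y) = (int k - int b) * int b - int b * int c" using S \<open>card ?N2 = b\<close> by simp
      thus ?thesis using True unfolding h_def by (simp add: algebra_simps)
    next
      case False
      hence "f x = 2" using fV x by blast
      hence "card ?N1 = c" using col x unfolding is_bc_coloring_def by blast
      hence "int (card ?N2) = int k - int c" using cN by linarith
      hence "(\<Sum>y\<in>?N. h y) = int c * int b - (int k - int c) * int c" using S \<open>card ?N1 = c\<close> by simp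
      thus ?thesis using False unfolding h_def by (simp add: algebra_simps)
    qed
  qed
  have stepB: "(\<Sum>y\<in>{y\<in>?V. hamming_adj n x y \<and> True}. h y) = (\<Sum>j<n. L j x - h x)" if x: "x \<in> ?V" for x
  proof -
    have "(\<Sum>y\<in>{y\<in>?V. hamming_adj n x y \<and> True}. h y) = (\<Sum>(j,a)\<in>Dx n q x (\<lambda>_. True). h (x(j:=a)))"
      by (rule sum_nbr[OF x])
    also have "\<dots> = (\<Sum>j<n. \<Sum>a\<in>{a. a<q \<and> a \<noteq> x j \<and> True}. h (x(j:=a)))"
      unfolding Dx_Sigma by (subst sum.Sigma) auto
    also have "\<dots> = (\<Sum>j<n. L j x - h x)"
    proof (rule sum.cong[OF refl])
      fix j assume "j \<in> {..<n}"
      hence xj: "x j \<in> {..<q}" using x unfolding hamming_vertices_def by auto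
      have e: "{a. a<q \<and> a \<noteq> x j \<and> True} = {..<q} - {x j}" by auto
      show "(\<Sum>a\<in>{a. a<q \<and> a \<noteq> x j \<and> True}. h (x(j:=a))) = L j x - h x"
        unfolding e L_def using sum.remove[OF finite_lessThan xj, of "\<lambda>a. h (x(j:=a))"] by simp
    qed
    finally show ?thesis .
  qed
  have stepC: "(\<Sum>x\<in>?V. h x * L j x) = (\<Sum>z\<in>{z\<in>?V. z j = 0}. L j z * L j z)" if j: "j < n" for j
  proof -
    have "(\<Sum>x\<in>?V. h x * L j x) = (\<Sum>z\<in>{z\<in>?V. z j = 0}. \<Sum>a<q. h (z(j:=a)) * L j (z(j:=a)))"
      by (rule decomp_sum[OF j qpos])
    also have "\<dots> = (\<Sum>z\<in>{z\<in>?V. z j = 0}. \<Sum>a<q. h (z(j:=a)) * L j z)"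
      by (simp add: L_def)
    also have "\<dots> = (\<Sum>z\<in>{z\<in>?V. z j = 0}. L j z * L j z)"
      by (simp add: L_def sum_distrib_right)
    finally show ?thesis .
  qed
  define H where "H = (\<Sum>x\<in>?V. h x * h x)"
  define Q where "Q j = (\<Sum>z\<in>{z\<in>?V. z j = 0}. L j z * L j z)" for j
  have Qnn: "0 \<le> Q j" for j unfolding Q_def by (rule sum_nonneg) simp
  have "(\<Sum>x\<in>?V. h x * (\<Sum>y\<in>{y\<in>?V. hamming_adj n x y \<and> True}. h y)) = (int k - int b - int c) * H"
  proof -
    have "(\<Sum>x\<in>?V. h x * (\<Sum>y\<in>{y\<in>?V. hamming_adj n x y \<and> True}. h y)) = (\<Sum>x\<in>?V. (int k - int b - int c) * (h x * h x))"
    proof (rule sum.cong[OF refl])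
      fix x assume x: "x \<in> ?V"
      show "h x * (\<Sum>y\<in>{y\<in>?V. hamming_adj n x y \<and> True}. h y) = (int k - int b - int c) * (h x * h x)"
        unfolding stepA[OF x] by (simp add: algebra_simps)
    qed
    thus ?thesis unfolding H_def by (simp add: sum_distrib_left)
  qed
  moreover have "(\<Sum>x\<in>?V. h x * (\<Sum>y\<in>{y\<in>?V. hamming_adj n x y \<and> True}. h y)) = (\<Sum>j<n. Q j) - int n * H"
  proof -
    have "(\<Sum>x\<in>?V. h x * (\<Sum>y\<in>{y\<in>?V. hamming_adj n x y \<and> True}. h y))
        = (\<Sum>x\<in>?V. \<Sum>j<n. h x * L j x - h x * h x)"
    proof (rule sum.cong[OF refl])
      fix x assume x: "x \<in> ?V"
      show "h x * (\<Sum>y\<in>{y\<in>?V. hamming_adj n x y \<and> True}. h y) = (\<Sum>j<n. h x * L j x - h x * h x)"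
        unfolding stepB[OF x] by (simp add: sum_distrib_left right_diff_distrib)
    qed
    also have "\<dots> = (\<Sum>j<n. \<Sum>x\<in>?V. h x * L j x) - (\<Sum>j<n. H)"
      unfolding H_def by (simp add: sum_subtractf sum.swap[of _ "{..<n}"] sum_distrib_left)
    also have "\<dots> = (\<Sum>j<n. Q j) - int n * H"
      using stepC unfolding Q_def by simp
    finally show ?thesis .
  qed
  ultimately have key: "(int k + int n - int b - int c) * H = (\<Sum>j<n. Q j)" by (simp add: algebra_simps)
  have kn: "int k + int n = int (n * q)" unfolding k_def using qpos
    by (simp add: of_nat_diff algebra_simps)
  have z0: "(\<lambda>_. 0) \<in> ?V" unfolding hamming_vertices_def using qpos by simp
  have Hpos: "0 < H"
  proof -
    have "0 < h (\<lambda>_. 0) * h (\<lambda>_. 0)" unfolding h_def using bpos cpos by simp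
    also have "\<dots> \<le> H" unfolding H_def
      by (rule member_le_sum[OF z0]) (auto simp: finV)
    finally show ?thesis .
  qed
  have "0 \<le> (int (n*q) - int b - int c) * H" using key kn sum_nonneg[of "{..<n}" Q] Qnn by simp
  hence "0 \<le> int (n*q) - int b - int c" using Hpos by (simp add: zero_le_mult_iff)
  thus "b + c \<le> n * q" by linarith
  assume eq: "b + c = n * q" and npos: "0 < n"
  have "int b + int c = int n * int q" using eq by (metis of_nat_add of_nat_mult)
  hence "(\<Sum>j<n. Q j) = 0" using key kn by (simp add: algebra_simps)
  hence "Q 0 = 0" using sum_nonneg_eq_0_iff[of "{..<n}" Q] Qnn npos by simp
  hence "L 0 (\<lambda>_. 0) * L 0 (\<lambda>_. 0) = 0"
    using sum_nonneg_eq_0_iff[of "{z\<in>?V. z 0 = 0}" "\<lambda>z. L 0 z * L 0 z"] z0 finV unfolding Q_def by simp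
  thus "(\<Sum>a<q. (if f ((\<lambda>_. 0)(0:=a)) = 1 then int b else - int c)) = 0"
    unfolding L_def h_def by simp
qed

lemma fiber_one:
  assumes "finite A" "inj_on \<phi> A" "\<phi> ` A \<subseteq> B" "card A = card B" "\<sigma> \<in> B" and fB: "finite B"
  shows "card {a\<in>A. \<phi> a = \<sigma>} = 1"
proof -
  have "card (\<phi> ` A) = card B" using card_image[OF assms(2)] assms(4) by simp
  hence "\<phi> ` A = B" using card_subset_eq[OF fB assms(3)] by simp
  then obtain a0 where a0: "a0 \<in> A" "\<phi> a0 = \<sigma>" using assms(5) by blast
  have "{a\<in>A. \<phi> a = \<sigma>} = {a0}"
  proof (rule set_eqI, rule iffI)
    fix a assume "a \<in> {a\<in>A. \<phi> a = \<sigma>}"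
    hence "a \<in> A" "\<phi> a = \<phi> a0" using a0 by auto
    thus "a \<in> {a0}" using inj_onD[OF assms(2) _ _ a0(1)] by simp
  qed (use a0 in simp)
  thus ?thesis by simp
qed

lemma syndrome_coloring:
  fixes s :: "(nat \<Rightarrow> nat) \<Rightarrow> nat" and m N C :: nat
  assumes sV: "\<And>x. x \<in> hamming_vertices n q \<Longrightarrow> s x < N"
    and fib: "\<And>x \<sigma>. x \<in> hamming_vertices n q \<Longrightarrow> \<sigma> < N \<Longrightarrow> \<sigma> \<noteq> s x \<Longrightarrow>
               card {y\<in>hamming_vertices n q. hamming_adj n x y \<and> s y = \<sigma>} = m"
    and eua: "ua \<in> hamming_vertices n q" "s ua < C"
    and ewb: "wb \<in> hamming_vertices n q" "\<not> s wb < C"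
    and CN: "C \<le> N"
  shows "has_bc_coloring (m * (N - C)) (m * C) n q"
proof -
  let ?V = "hamming_vertices n q"
  define f where "f x = (if s x < C then 1 else (2::nat))" for x
  have cnt: "card {y\<in>?V. hamming_adj n x y \<and> s y \<in> T} = m * card T"
    if x: "x \<in> ?V" and T: "T \<subseteq> {..<N}" "s x \<notin> T" for x T
  proof -
    have "{y\<in>?V. hamming_adj n x y \<and> s y \<in> T} = (\<Union>\<sigma>\<in>T. {y\<in>?V. hamming_adj n x y \<and> s y = \<sigma>})" by auto
    moreover have "card (\<Union>\<sigma>\<in>T. {y\<in>?V. hamming_adj n x y \<and> s y = \<sigma>}) = (\<Sum>\<sigma>\<in>T. card {y\<in>?V. hamming_adj n x y \<and> s y = \<sigma>})"
      by (rule card_UN_disjoint) (use T finite_subset[OF T(1)] finite_V in auto)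
    moreover have "(\<Sum>\<sigma>\<in>T. card {y\<in>?V. hamming_adj n x y \<and> s y = \<sigma>}) = (\<Sum>\<sigma>\<in>T. m)"
      by (rule sum.cong[OF refl]) (use T fib[OF x] in auto)
    ultimately show ?thesis by simp
  qed
  have "is_bc_coloring (m * (N - C)) (m * C) n q f"
    unfolding is_bc_coloring_def
  proof (intro conjI ballI impI)
    show "f ` ?V = {1, 2}"
    proof
      show "f ` ?V \<subseteq> {1,2}" unfolding f_def by auto
      have "f ua = 1" "f wb = 2" using eua ewb unfolding f_def by auto
      thus "{1,2} \<subseteq> f ` ?V" using eua(1) ewb(1) by (metis empty_subsetI image_eqI insert_subset)
    qed
  next
    fix x assume x: "x \<in> ?V" and fx: "f x = 1"
    hence sx: "s x < C" unfolding f_def by (auto split: if_splits)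
    have "{y\<in>?V. hamming_adj n x y \<and> f y = 2} = {y\<in>?V. hamming_adj n x y \<and> s y \<in> {C..<N}}"
      using sV unfolding f_def by auto
    also have "card \<dots> = m * card {C..<N}" by (rule cnt[OF x]) (use sx in auto)
    finally show "card {y\<in>?V. hamming_adj n x y \<and> f y = 2} = m * (N - C)" by simp
  next
    fix x assume x: "x \<in> ?V" and fx: "f x = 2"
    hence sx: "\<not> s x < C" unfolding f_def by (auto split: if_splits)
    have "{y\<in>?V. hamming_adj n x y \<and> f y = 1} = {y\<in>?V. hamming_adj n x y \<and> s y \<in> {..<C}}"
      unfolding f_def by auto
    also have "card \<dots> = m * card {..<C}" by (rule cnt[OF x]) (use sx CN in auto)
    finally show "card {y\<in>?V. hamming_adj n x y \<and> f y = 1} = m * C" by simp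
  qed
  thus ?thesis unfolding has_bc_coloring_def by blast
qed

lemma sum_upd_nat:
  fixes g :: "nat \<Rightarrow> nat"
  assumes "finite A" "j \<in> A"
  shows "int (\<Sum>i\<in>A. (g(j:=v)) i) = int (\<Sum>i\<in>A. g i) - int (g j) + int v"
proof -
  have e: "(\<Sum>i\<in>A-{j}. (g(j:=v)) i) = (\<Sum>i\<in>A-{j}. g i)" by (rule sum.cong) auto
  have "(\<Sum>i\<in>A. (g(j:=v)) i) = v + (\<Sum>i\<in>A-{j}. g i)"
    using sum.remove[OF assms, of "g(j:=v)"] unfolding e by simp
  moreover have "(\<Sum>i\<in>A. g i) = g j + (\<Sum>i\<in>A-{j}. g i)" using sum.remove[OF assms] .
  ultimately show ?thesis by simp
qed

lemma dvd_small: "int q dvd (z::int) \<Longrightarrow> \<bar>z\<bar> < int q \<Longrightarrow> z = 0"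
  using dvd_imp_le_int[of z "int q"] by fastforce

lemma mod_eq_int: "(a::nat) mod q = b mod q \<longleftrightarrow> int q dvd (int a - int b)"
proof -
  have "(a mod q = b mod q) \<longleftrightarrow> (int (a mod q) = int (b mod q))" by simp
  also have "\<dots> \<longleftrightarrow> int a mod int q = int b mod int q" by (simp add: of_nat_mod)
  also have "\<dots> \<longleftrightarrow> int q dvd (int a - int b)" by (rule mod_eq_dvd_iff)
  finally show ?thesis .
qed

lemma enc_eq:
  assumes "u < q" "v < (q::nat)" "u' < q" "v' < q"
  shows "u*q + v = u'*q + v' \<longleftrightarrow> u = u' \<and> v = v'"
proof
  assume e: "u*q + v = u'*q + v'"
  have "(u*q + v) div q = u" "(u'*q + v') div q = u'" using assms by auto
  moreover have "(u*q + v) mod q = v" "(u'*q + v') mod q = v'" using assms by auto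
  ultimately show "u = u' \<and> v = v'" using e by metis
qed simp

lemma enc_less: "u < q \<Longrightarrow> v < (q::nat) \<Longrightarrow> u*q + v < q*q"
proof -
  assume "u < q" "v < q"
  hence "u*q + v < u*q + q" by simp
  also have "\<dots> = (u+1)*q" by simp
  also have "\<dots> \<le> q*q" using \<open>u<q\<close> by (intro mult_right_mono) auto
  finally show ?thesis .
qed

definition U :: "nat \<Rightarrow> (nat \<Rightarrow> nat) \<Rightarrow> nat" where "U q x = (\<Sum>i<q. x i)"
definition W :: "nat \<Rightarrow> (nat \<Rightarrow> nat) \<Rightarrow> nat" where "W q x = (\<Sum>i<q. i * x i) + x q"
definition syn :: "nat \<Rightarrow> (nat \<Rightarrow> nat) \<Rightarrow> nat" where "syn q x = (U q x mod q) * q + W q x mod q"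
definition D1 :: "nat \<Rightarrow> nat \<Rightarrow> int \<Rightarrow> int" where "D1 q j t = (if j < q then t else 0)"
definition D2 :: "nat \<Rightarrow> nat \<Rightarrow> int \<Rightarrow> int" where "D2 q j t = (if j < q then int j * t else t)"

lemma U_upd: "j \<le> q \<Longrightarrow> int (U q (x(j:=a))) = int (U q x) + D1 q j (int a - int (x j))"
proof (cases "j < q")
  case True
  thus ?thesis unfolding U_def D1_def using sum_upd_nat[of "{..<q}" j x a] by simp
next
  case False
  assume "j \<le> q"
  have "(\<Sum>i<q. (x(j:=a)) i) = (\<Sum>i<q. x i)" by (rule sum.cong) (use False in auto)
  thus ?thesis unfolding U_def D1_def using False by simp
qed

lemma W_upd: "j \<le> q \<Longrightarrow> int (W q (x(j:=a))) = int (W q x) + D2 q j (int a - int (x j))"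
proof (cases "j < q")
  case True
  have e: "(\<lambda>i. i * (x(j:=a)) i) = (\<lambda>i. i * x i)(j := j * a)" by (rule ext) simp
  have "int (\<Sum>i<q. i * (x(j:=a)) i) = int (\<Sum>i<q. i * x i) - int (j * x j) + int (j * a)"
    unfolding e using sum_upd_nat[of "{..<q}" j "\<lambda>i. i * x i" "j * a"] True by simp
  moreover have "(x(j:=a)) q = x q" using True by simp
  ultimately show ?thesis unfolding W_def D2_def using True by (simp add: algebra_simps)
next
  case False
  assume "j \<le> q"
  hence jq: "j = q" using False by simp
  have "(\<Sum>i<q. i * (x(j:=a)) i) = (\<Sum>i<q. i * x i)" by (rule sum.cong) (use jq in auto)
  thus ?thesis unfolding W_def D2_def using jq by simp
qed

lemma core:
  fixes q j j' :: nat and t t' :: int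
  assumes p: "prime q" and j: "j \<le> q" "j' \<le> q" and t: "\<not> int q dvd t" "\<not> int q dvd t'"
    and d1: "int q dvd (D1 q j t - D1 q j' t')" and d2: "int q dvd (D2 q j t - D2 q j' t')"
  shows "j = j' \<and> int q dvd (t - t')"
proof (cases "j < q")
  case True
  show ?thesis
  proof (cases "j' < q")
    case True': True
    have tt: "int q dvd (t - t')" using d1 True True' unfolding D1_def by simp
    have "int q dvd (int j * t - int j' * t')" using d2 True True' unfolding D2_def by simp
    moreover have "int j * t - int j' * t' = int j * (t - t') + (int j - int j') * t'" by (simp add: algebra_simps)
    ultimately have "int q dvd (int j - int j') * t'" using tt by (metis dvd_add_right_iff dvd_mult)
    moreover have pi: "prime (int q)" using p by simp
    ultimately have "int q dvd (int j - int j')" using t(2) prime_dvd_mult_iff[OF pi] by blast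
    hence "int j - int j' = 0" by (rule dvd_small) (use True True' in auto)
    thus ?thesis using tt by simp
  next
    case False
    thus ?thesis using d1 True t(1) unfolding D1_def by simp
  qed
next
  case False
  show ?thesis
  proof (cases "j' < q")
    case True
    thus ?thesis using d1 False t(2) unfolding D1_def by simp
  next
    case False': False
    hence "j = j'" using False j by simp
    thus ?thesis using d2 False False' unfolding D2_def by simp
  qed
qed

lemma core0:
  fixes q j :: nat and t :: int
  assumes "\<not> int q dvd t"
  shows "\<not> (int q dvd D1 q j t \<and> int q dvd D2 q j t)"
  using assms unfolding D1_def D2_def by auto

lemma syn_less: "0 < q \<Longrightarrow> syn q x < q * q"
  unfolding syn_def by (rule enc_less) auto

lemma syn_eq: "0 < q \<Longrightarrow> syn q y = syn q y' \<longleftrightarrow>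
   int q dvd (int (U q y) - int (U q y')) \<and> int q dvd (int (W q y) - int (W q y'))"
  unfolding syn_def by (subst enc_eq) (auto simp: mod_eq_int)

lemma t_ndvd: "a < q \<Longrightarrow> b < q \<Longrightarrow> a \<noteq> b \<Longrightarrow> \<not> int q dvd (int a - int b)"
proof
  assume "a < q" "b < q" "a \<noteq> b" "int q dvd (int a - int b)"
  hence "int a - int b = 0" by (intro dvd_small) auto
  thus False using \<open>a \<noteq> b\<close> by simp
qed

lemma syn_fib:
  assumes p: "prime q" and x: "x \<in> hamming_vertices (q+1) q" and \<sigma>: "\<sigma> < q*q" "\<sigma> \<noteq> syn q x"
  shows "card {y\<in>hamming_vertices (q+1) q. hamming_adj (q+1) x y \<and> syn q y = \<sigma>} = 1"
proof -
  have q0: "0 < q" using p prime_gt_0_nat by blast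
  let ?A = "Dx (q+1) q x (\<lambda>_. True)"
  define \<phi> where "\<phi> p = syn q (x(fst p := snd p))" for p
  have xlt: "x j < q" if "j < q+1" for j using x that unfolding hamming_vertices_def by auto
  have eqD: "Dx (q+1) q x (\<lambda>y. syn q y = \<sigma>) = {p\<in>?A. \<phi> p = \<sigma>}" unfolding Dx_def \<phi>_def by auto
  have A: "p \<in> ?A \<longleftrightarrow> fst p \<le> q \<and> snd p < q \<and> snd p \<noteq> x (fst p)" for p
    unfolding Dx_def by (cases p) auto
  have inj: "inj_on \<phi> ?A"
  proof (rule inj_onI)
    fix p p' assume pA: "p \<in> ?A" "p' \<in> ?A" and e: "\<phi> p = \<phi> p'"
    obtain j a where pj: "p = (j,a)" by (cases p)
    obtain j' a' where pj': "p' = (j',a')" by (cases p')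
    have h: "j \<le> q" "a < q" "a \<noteq> x j" "j' \<le> q" "a' < q" "a' \<noteq> x j'" using pA A pj pj' by auto
    have "syn q (x(j:=a)) = syn q (x(j':=a'))" using e pj pj' \<phi>_def by simp
    hence d: "int q dvd (int (U q (x(j:=a))) - int (U q (x(j':=a'))))"
             "int q dvd (int (W q (x(j:=a))) - int (W q (x(j':=a'))))" using syn_eq[OF q0] by auto
    let ?t = "int a - int (x j)" and ?t' = "int a' - int (x j')"
    have "int q dvd (D1 q j ?t - D1 q j' ?t')" using d(1) U_upd[OF h(1)] U_upd[OF h(4)] by simp
    moreover have "int q dvd (D2 q j ?t - D2 q j' ?t')" using d(2) W_upd[OF h(1)] W_upd[OF h(4)] by simp
    moreover have "\<not> int q dvd ?t" "\<not> int q dvd ?t'" using t_ndvd h xlt by auto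
    ultimately have c: "j = j' \<and> int q dvd (?t - ?t')" using core[OF p h(1) h(4)] by blast
    hence "int q dvd (int a - int a')" by (metis diff_diff_eq2 diff_add_cancel)
    hence "int a - int a' = 0" by (intro dvd_small) (use h in auto)
    thus "p = p'" using c pj pj' by simp
  qed
  have img: "\<phi> ` ?A \<subseteq> {..<q*q} - {syn q x}"
  proof
    fix s assume "s \<in> \<phi> ` ?A"
    then obtain j a where ja: "(j,a) \<in> ?A" "s = syn q (x(j:=a))" unfolding \<phi>_def by auto
    have h: "j \<le> q" "a < q" "a \<noteq> x j" using ja A by auto
    have "syn q (x(j:=a)) \<noteq> syn q x"
    proof
      assume "syn q (x(j:=a)) = syn q x"
      hence d: "int q dvd (int (U q (x(j:=a))) - int (U q x))"
             "int q dvd (int (W q (x(j:=a))) - int (W q x))" using syn_eq[OF q0] by auto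
      have "int q dvd D1 q j (int a - int (x j))" "int q dvd D2 q j (int a - int (x j))"
        using d U_upd[OF h(1)] W_upd[OF h(1)] by auto
      moreover have "\<not> int q dvd (int a - int (x j))" using t_ndvd h xlt by auto
      ultimately show False using core0 by blast
    qed
    thus "s \<in> {..<q*q} - {syn q x}" using ja syn_less[OF q0] by auto
  qed
  have cA: "card ?A = card ({..<q*q} - {syn q x})"
    using card_Dx_True[OF x] syn_less[OF q0, of x] q0 by (simp add: algebra_simps)
  have "card {y\<in>hamming_vertices (q+1) q. hamming_adj (q+1) x y \<and> syn q y = \<sigma>} = card {p\<in>?A. \<phi> p = \<sigma>}"
    using card_nbr[OF x] eqD by simp
  also have "\<dots> = 1" by (rule fiber_one[OF finite_Dx inj img cA]) (use \<sigma> in auto)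
  finally show ?thesis .
qed

definition s1 :: "nat \<Rightarrow> nat \<Rightarrow> (nat \<Rightarrow> nat) \<Rightarrow> nat" where "s1 d q x = (\<Sum>i<d. x i) mod q"

lemma s1_fib:
  assumes q0: "0 < q" and x: "x \<in> hamming_vertices d q" and \<sigma>: "\<sigma> < q" "\<sigma> \<noteq> s1 d q x"
  shows "card {y\<in>hamming_vertices d q. hamming_adj d x y \<and> s1 d q y = \<sigma>} = d"
proof -
  have "card {y\<in>hamming_vertices d q. hamming_adj d x y \<and> s1 d q y = \<sigma>}
        = card (Dx d q x (\<lambda>y. s1 d q y = \<sigma>))" by (rule card_nbr[OF x])
  also have "\<dots> = (\<Sum>j<d. card {a. a<q \<and> a \<noteq> x j \<and> s1 d q (x(j:=a)) = \<sigma>})"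
    unfolding Dx_Sigma by (rule card_SigmaI) auto
  also have "\<dots> = (\<Sum>j<d. 1)"
  proof (rule sum.cong[OF refl])
    fix j assume "j \<in> {..<d}"
    hence j: "j \<in> {..<d}" .
    define R where "R = (\<Sum>i\<in>{..<d}-{j}. x i)"
    have sv: "s1 d q (x(j:=a)) = (R + a) mod q" for a
    proof -
      have e: "(\<Sum>i\<in>{..<d}-{j}. (x(j:=a)) i) = R" unfolding R_def by (rule sum.cong) auto
      show ?thesis unfolding s1_def using sum.remove[OF finite_lessThan j, of "x(j:=a)"] e by (simp add: add.commute)
    qed
    have sx: "s1 d q x = (R + x j) mod q" using sv[of "x j"] by simp
    have "{a. a<q \<and> a \<noteq> x j \<and> s1 d q (x(j:=a)) = \<sigma>} = {a\<in>{..<q}. (R + a) mod q = \<sigma>}"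
      using sv sx \<sigma>(2) by auto
    also have "card \<dots> = 1"
    proof (rule fiber_one)
      show "inj_on (\<lambda>a. (R + a) mod q) {..<q}"
      proof (rule inj_onI)
        fix a a' assume "a \<in> {..<q}" "a' \<in> {..<q}" "(R + a) mod q = (R + a') mod q"
        hence "[R + a = R + a'] (mod q)" "a < q" "a' < q" by (auto simp: cong_def)
        thus "a = a'" using cong_add_lcancel_nat cong_less_modulus_unique_nat by blast
      qed
    next show "finite {..<q}" by simp
    next show "finite {..<q}" by simp
    next show "(\<lambda>a. (R + a) mod q) ` {..<q} \<subseteq> {..<q}" using q0 by auto
    next show "card {..<q} = card {..<q}" ..
    next show "\<sigma> \<in> {..<q}" using \<sigma> by simp
    qed
    finally show "card {a. a<q \<and> a \<noteq> x j \<and> s1 d q (x(j:=a)) = \<sigma>} = 1" .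
  qed
  finally show ?thesis by simp
qed

lemma exist1:
  assumes q0: "0 < q" and d0: "0 < d" and b0: "0 < b'" and c0: "0 < c'" and bc: "b' + c' = q"
  shows "has_bc_coloring (d * b') (d * c') d q"
proof -
  have z: "(\<lambda>_. 0) \<in> hamming_vertices d q" unfolding hamming_vertices_def using q0 by simp
  have sz: "s1 d q (\<lambda>_. 0) = 0" unfolding s1_def by simp
  have "c' < q" "c' \<noteq> s1 d q (\<lambda>_. 0)" using bc b0 c0 sz by auto
  hence "card {y\<in>hamming_vertices d q. hamming_adj d (\<lambda>_. 0) y \<and> s1 d q y = c'} = d"
    by (intro s1_fib[OF q0 z])
  hence "{y\<in>hamming_vertices d q. hamming_adj d (\<lambda>_. 0) y \<and> s1 d q y = c'} \<noteq> {}" using d0 by force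
  then obtain x2 where x2: "x2 \<in> hamming_vertices d q" "s1 d q x2 = c'" by blast
  have "has_bc_coloring (d * (q - c')) (d * c') d q"
  proof (rule syndrome_coloring[where s = "s1 d q" and ua = "\<lambda>_. 0" and wb = x2])
    show "s1 d q x < q" for x unfolding s1_def using q0 by simp
    show "card {y\<in>hamming_vertices d q. hamming_adj d x y \<and> s1 d q y = \<sigma>} = d"
      if "x \<in> hamming_vertices d q" "\<sigma> < q" "\<sigma> \<noteq> s1 d q x" for x \<sigma>
      by (rule s1_fib[OF q0 that])
  next show "(\<lambda>_. 0) \<in> hamming_vertices d q" by (rule z)
  next show "s1 d q (\<lambda>_. 0) < c'" using sz c0 by simp
  next show "x2 \<in> hamming_vertices d q" by (rule x2(1))
  next show "\<not> s1 d q x2 < c'" using x2 by simp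
  next show "c' \<le> q" using bc by simp
  qed
  moreover have "q - c' = b'" using bc by simp
  ultimately show ?thesis by simp
qed

lemma exist2:
  assumes p: "prime q" and c0: "0 < c" and cq: "c < q^2"
  shows "has_bc_coloring (q^2 - c) c (q+1) q"
proof -
  have q0: "0 < q" using p prime_gt_0_nat by blast
  have q2: "2 \<le> q" using p prime_ge_2_nat by blast
  have z: "(\<lambda>_. 0) \<in> hamming_vertices (q+1) q" unfolding hamming_vertices_def using q0 by simp
  have sz: "syn q (\<lambda>_. 0) = 0" unfolding syn_def U_def W_def by simp
  have qq: "1 < q*q" using q2 by (metis less_1_mult one_less_numeral_iff order_less_le_trans semiring_norm(76))
  have "q*q - 1 < q*q" "q*q - 1 \<noteq> syn q (\<lambda>_. 0)" using sz qq by auto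
  hence "card {y\<in>hamming_vertices (q+1) q. hamming_adj (q+1) (\<lambda>_. 0) y \<and> syn q y = q*q - 1} = 1"
    by (intro syn_fib[OF p z])
  hence "{y\<in>hamming_vertices (q+1) q. hamming_adj (q+1) (\<lambda>_. 0) y \<and> syn q y = q*q - 1} \<noteq> {}" by (metis card.empty zero_neq_one)
  then obtain x2 where x2: "x2 \<in> hamming_vertices (q+1) q" "syn q x2 = q*q - 1" by blast
  have "has_bc_coloring (1 * (q*q - c)) (1 * c) (q+1) q"
  proof (rule syndrome_coloring[where s = "syn q" and ua = "\<lambda>_. 0" and wb = x2])
    show "syn q x < q*q" for x by (rule syn_less[OF q0])
    show "card {y\<in>hamming_vertices (q+1) q. hamming_adj (q+1) x y \<and> syn q y = \<sigma>} = 1"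
      if "x \<in> hamming_vertices (q+1) q" "\<sigma> < q*q" "\<sigma> \<noteq> syn q x" for x \<sigma>
      by (rule syn_fib[OF p that])
  next show "(\<lambda>_. 0) \<in> hamming_vertices (q+1) q" by (rule z)
  next show "syn q (\<lambda>_. 0) < c" using sz c0 by simp
  next show "x2 \<in> hamming_vertices (q+1) q" by (rule x2(1))
  next show "\<not> syn q x2 < c" using x2 cq by (simp add: power2_eq_square)
  next show "c \<le> q*q" using cq by (simp add: power2_eq_square)
  qed
  thus ?thesis by (simp add: power2_eq_square)
qed

lemma sum_if_count:
  "(\<Sum>a<q. if P a then int b else - int c) = int (card {a\<in>{..<q}. P a}) * (int b + int c) - int q * int c"
proof -
  have "(\<Sum>a<q. if P a then int b else - int c) = (\<Sum>a<q. (if P a then int b + int c else 0) - int c)"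
    by (rule sum.cong) auto
  also have "\<dots> = (\<Sum>a<q. (if P a then int b + int c else 0)) - int q * int c"
    by (simp add: sum_subtractf)
  also have "(\<Sum>a<q. (if P a then int b + int c else 0)) = (\<Sum>a\<in>{a\<in>{..<q}. P a}. int b + int c)"
    using sum.inter_restrict[of "{..<q}" "\<lambda>_. int b + int c" "{a. P a}"]
    by (simp add: Int_def Collect_conj_eq[symmetric])
  finally show ?thesis by simp
qed

theorem corollary3:
  fixes q b c :: nat
  assumes "prime q" and "0 < b" and "0 < c"
  shows "((b + c) div gcd b c = q \<longrightarrow> threshold b c q = gcd b c) \<and>
         (gcd b c = 1 \<and> b + c = q ^ 2 \<longrightarrow> threshold b c q = q + 1)"
proof (intro conjI impI)
  have q0: "0 < q" using assms(1) prime_gt_0_nat by blast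
  {
    assume h: "(b + c) div gcd b c = q"
    define d where "d = gcd b c"
    have d0: "0 < d" unfolding d_def using assms(2) by simp
    obtain b' where b': "b = d * b'" unfolding d_def by (metis gcd_dvd1 dvdE)
    obtain c' where c': "c = d * c'" unfolding d_def by (metis gcd_dvd2 dvdE)
    have b'0: "0 < b'" "0 < c'" using b' c' assms(2,3) by auto
    have "b + c = d * (b' + c')" using b' c' by (simp add: algebra_simps)
    hence bcq: "b' + c' = q" using h d0 unfolding d_def[symmetric] by simp
    have hasd: "has_bc_coloring b c d q" using exist1[OF q0 d0 b'0 bcq] b' c' by simp
    have "d \<le> m" if hm: "has_bc_coloring b c m q" for m
    proof (rule ccontr)
      assume "\<not> d \<le> m"
      then obtain f where "is_bc_coloring b c m q f" using hm unfolding has_bc_coloring_def by blast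
      hence "b + c \<le> m * q" using spectral(1) assms(2,3) q0 by blast
      moreover have "b + c = d * q" using \<open>b + c = d * (b' + c')\<close> bcq by simp
      moreover have "m * q < d * q" using \<open>\<not> d \<le> m\<close> q0 by simp
      ultimately show False by simp
    qed
    hence "threshold b c q = d" unfolding threshold_def using hasd by (intro Least_equality) auto
    thus "threshold b c q = gcd b c" unfolding d_def .
  }
  {
    assume h: "gcd b c = 1 \<and> b + c = q ^ 2"
    have cq: "c < q^2" using h assms(2) by simp
    have e: "q^2 - c = b" using h by (metis add_diff_cancel_right')
    have has: "has_bc_coloring b c (q+1) q" using exist2[OF assms(1) assms(3) cq] unfolding e .
    have "q + 1 \<le> m" if hm: "has_bc_coloring b c m q" for m
    proof (rule ccontr)
      assume "\<not> q + 1 \<le> m"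
      then obtain f where f: "is_bc_coloring b c m q f" using hm unfolding has_bc_coloring_def by blast
      hence "b + c \<le> m * q" using spectral(1) assms(2,3) q0 by blast
      hence "q * q \<le> m * q" using h by (simp add: power2_eq_square)
      hence "q \<le> m" using q0 by simp
      hence mq: "m = q" using \<open>\<not> q + 1 \<le> m\<close> by simp
      have "(\<Sum>a<q. (if f ((\<lambda>_. 0)(0:=a)) = 1 then int b else - int c)) = 0"
        using spectral(2)[OF f assms(2,3) q0] h mq q0 by (simp add: power2_eq_square)
      then obtain A where "int A * (int b + int c) - int q * int c = 0"
        using sum_if_count by metis
      hence "int A * (int q * int q) = int q * int c" using h
        by (metis eq_iff_diff_eq_0 of_nat_add of_nat_mult power2_eq_square)
      hence "int A * int q = int c" using q0 by (simp add: algebra_simps)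
      hence qc: "q dvd c" by (metis dvd_triv_right of_nat_eq_iff of_nat_mult)
      hence "q dvd b" using h by (metis dvd_add_left_iff dvd_power[of 2 q] zero_less_numeral)
      hence "q dvd gcd b c" using qc by simp
      thus False using h assms(1) by (simp add: prime_gt_1_nat)
    qed
    thus "threshold b c q = q + 1" unfolding threshold_def using has by (intro Least_equality) auto
  }
qed

end
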